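(* Let $\mathbf{y}\in\mathbb{R}^n$ and $\mathbf{X}=(\mathbf{x}_1,\ldots,\mathbf{x}_p)\in\mathbb{R}^{n\times p}$ satisfy $\sum_{i=1}^n y_i=0$, and for every $j=1,\ldots,p$, $\sum_{i=1}^n x_{ij}=0$ and $\frac1n\sum_{i=1}^n x_{ij}^2=1$. For $\lambda\ge 0$ let $$\widehat{\boldsymbol\beta}(\lambda)=\operatorname*{argmin}_{\boldsymbol\beta\in\mathbb{R}^p}\ \frac{1}{2n}\|\mathbf{y}-\mathbf{X}\boldsymbol\beta\|^2+\lambda\|\boldsymbol\beta\|_1 .$$ Let $\lambda_m=\max_j|\mathbf{x}_j^T\mathbf{y}/n|$ and let $\mathbf{x}_*=\operatorname*{argmax}_{\mathbf{x}_j}|\mathbf{x}_j^T\mathbf{y}|$. Then for any $\lambda\in(0,\lambda_m]$ and any $j$, we have $\widehat{\beta}_j(\lambda)=0$ if $$\left|(\lambda_m+\lambda)\mathbf{x}_j^T\mathbf{y}-(\lambda_m-\lambda)\,\mathrm{sign}(\mathbf{x}_*^T\mathbf{y})\,\lambda_m\,\mathbf{x}_j^T\mathbf{x}_*\right|<2n\lambda\lambda_m-(\lambda_m-\lambda)\sqrt{n\|\mathbf{y}\|^2-n^2\lambda_m^2}.$$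
   Context: $\|\cdot\|$ is the Euclidean norm and $\|\cdot\|_1$ the $\ell_1$ norm. $\widehat{\beta}_j(\lambda)$ denotes the $j$th coordinate of the lasso solution $\widehat{\boldsymbol\beta}(\lambda)$. *)

theory Defs
  imports "HOL-Analysis.Analysis"
begin

text \<open>Observations are indexed by the finite type 'n (n = CARD('n)), predictors by 'p.
  X :: real^'p^'n is the n x p design matrix; column j X is the predictor x_j.\<close>

definition l1norm :: "real^'p \<Rightarrow> real" where
  "l1norm b = (\<Sum>j\<in>UNIV. \<bar>b $ j\<bar>)"

definition lasso_obj :: "real^'p^'n \<Rightarrow> real^'n \<Rightarrow> real \<Rightarrow> real^'p \<Rightarrow> real" where
  "lasso_obj X y lam b =
     1 / (2 * real CARD('n)) * (norm (y - X *v b))\<^sup>2 + lam * l1norm b"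

definition is_lasso_sol :: "real^'p^'n \<Rightarrow> real^'n \<Rightarrow> real \<Rightarrow> real^'p \<Rightarrow> bool" where
  "is_lasso_sol X y lam b \<longleftrightarrow> (\<forall>c. lasso_obj X y lam b \<le> lasso_obj X y lam c)"

definition lambda_max :: "real^'p^'n \<Rightarrow> real^'n \<Rightarrow> real" where
  "lambda_max X y = Max (range (\<lambda>j. \<bar>column j X \<bullet> y / real CARD('n)\<bar>))"

end

theory Submission
  imports Defs
begin

lemma one_sided:
  fixes c q d :: real
  assumes "0 < d" "0 \<le> q" "\<And>t. 0 < t \<Longrightarrow> t < d \<Longrightarrow> 0 \<le> t*c + t^2*q"
  shows "0 \<le> c"
proof (rule ccontr)
  assume "\<not> 0 \<le> c"
  hence c: "c < 0" by simp
  define t where "t = min (d/2) (-c/(2*(q+1)))"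
  have "0 < -c/(2*(q+1))" using c assms by (intro divide_pos_pos) auto
  hence t0: "0 < t" using assms by (simp add: t_def)
  have td: "t < d" using assms by (simp add: t_def)
  have "t*q \<le> t*(q+1)" using t0 by simp
  also have "t*(q+1) \<le> (-c/(2*(q+1)))*(q+1)"
    using assms by (intro mult_right_mono) (auto simp: t_def)
  also have "\<dots> = -c/2" using assms by (simp add: field_simps)
  finally have "c + t*q < 0" using c by simp
  hence "t*(c+t*q) < 0" using t0 by (simp add: mult_pos_neg)
  moreover have "0 \<le> t*c + t^2*q" using assms(3)[OF t0 td] .
  ultimately show False by (simp add: algebra_simps power2_eq_square)
qed

lemma mv_axis: "(X::real^'p^'n) *v (b + t *\<^sub>R axis k 1) = X *v b + t *\<^sub>R column k X"
  by (simp add: matrix_vector_right_distrib matrix_vector_mult_scaleR matrix_vector_mult_basis)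

lemma norm_exp: "(norm (r - t *\<^sub>R (g::'a::real_inner)))^2 = (norm r)^2 - 2*t*(g \<bullet> r) + t^2*(norm g)^2"
  unfolding power2_norm_eq_inner
  by (simp add: inner_diff_left inner_diff_right inner_commute algebra_simps power2_eq_square)

lemma l1_axis: "l1norm (b + t *\<^sub>R axis k 1) = l1norm b + (\<bar>b$k + t\<bar> - \<bar>b$k\<bar>)"
proof -
  have "l1norm (b + t *\<^sub>R axis k 1) = \<bar>b$k + t\<bar> + (\<Sum>i\<in>UNIV-{k}. \<bar>b$i\<bar>)"
    unfolding l1norm_def
    by (subst sum.remove[of UNIV k]) (auto simp: axis_def intro!: sum.cong)
  moreover have "l1norm b = \<bar>b$k\<bar> + (\<Sum>i\<in>UNIV-{k}. \<bar>b$i\<bar>)"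
    unfolding l1norm_def by (subst sum.remove[of UNIV k]) auto
  ultimately show ?thesis by simp
qed

lemma kkt_basic:
  fixes X :: "real^'p^'n"
  assumes sol: "is_lasso_sol X y lam b"
  shows "0 \<le> -2*t*(column k X \<bullet> (y - X *v b)) + t^2*(norm (column k X))^2
            + 2*real CARD('n)*lam*(\<bar>b$k+t\<bar> - \<bar>b$k\<bar>)"
proof -
  let ?N = "real CARD('n)"
  let ?r = "y - X *v b" and ?g = "column k X"
  have N: "?N > 0" by simp
  have "lasso_obj X y lam b \<le> lasso_obj X y lam (b + t *\<^sub>R axis k 1)"
    using sol unfolding is_lasso_sol_def by blast
  hence "1/(2*?N)*(norm ?r)^2 + lam*l1norm b \<le>
     1/(2*?N)*(norm (?r - t *\<^sub>R ?g))^2 + lam*(l1norm b + (\<bar>b$k + t\<bar> - \<bar>b$k\<bar>))"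
    unfolding lasso_obj_def mv_axis l1_axis by (simp add: algebra_simps)
  moreover have "(norm (?r - t *\<^sub>R ?g))^2 = (norm ?r)^2 - 2*t*(?g \<bullet> ?r) + t^2*(norm ?g)^2"
    by (rule norm_exp)
  ultimately have "1/(2*?N)*(norm ?r)^2 + lam*l1norm b \<le>
     1/(2*?N)*((norm ?r)^2 - 2*t*(?g \<bullet> ?r) + t^2*(norm ?g)^2) + lam*(l1norm b + (\<bar>b$k + t\<bar> - \<bar>b$k\<bar>))"
    by simp
  hence "0 \<le> 1/(2*?N)*(- 2*t*(?g \<bullet> ?r) + t^2*(norm ?g)^2) + lam*(\<bar>b$k + t\<bar> - \<bar>b$k\<bar>)"
    by (simp add: algebra_simps)
  hence "0 \<le> 2*?N*(1/(2*?N)*(- 2*t*(?g \<bullet> ?r) + t^2*(norm ?g)^2) + lam*(\<bar>b$k + t\<bar> - \<bar>b$k\<bar>))"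
    using N by simp
  thus ?thesis using N by (simp add: algebra_simps)
qed

lemma kkt_bound:
  fixes X :: "real^'p^'n"
  assumes sol: "is_lasso_sol X y lam b" and lam: "0 \<le> lam"
  shows "\<bar>column k X \<bullet> (y - X *v b)\<bar> \<le> real CARD('n) * lam"
proof -
  let ?N = "real CARD('n)"
  let ?a = "column k X \<bullet> (y - X *v b)" and ?q = "(norm (column k X))^2"
  have N: "?N > 0" by simp
  have "0 \<le> 2*(?N*lam - ?a)"
  proof (rule one_sided[of 1 ?q])
    fix t :: real assume t: "0 < t" "t < 1"
    have "\<bar>b$k+t\<bar> - \<bar>b$k\<bar> \<le> t" using t by linarith
    hence "2*?N*lam*(\<bar>b$k+t\<bar> - \<bar>b$k\<bar>) \<le> 2*?N*lam*t"
      using lam N by (intro mult_left_mono) auto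
    with kkt_basic[OF sol, of t k]
    show "0 \<le> t * (2*(?N*lam - ?a)) + t^2 * ?q" by (simp add: algebra_simps)
  qed auto
  moreover have "0 \<le> 2*(?N*lam + ?a)"
  proof (rule one_sided[of 1 ?q])
    fix t :: real assume t: "0 < t" "t < 1"
    have "\<bar>b$k+ -t\<bar> - \<bar>b$k\<bar> \<le> t" using t by linarith
    hence "2*?N*lam*(\<bar>b$k+ -t\<bar> - \<bar>b$k\<bar>) \<le> 2*?N*lam*t"
      using lam N by (intro mult_left_mono) auto
    with kkt_basic[OF sol, of "-t" k]
    show "0 \<le> t * (2*(?N*lam + ?a)) + t^2 * ?q" by (simp add: algebra_simps)
  qed auto
  ultimately show ?thesis by (simp add: abs_le_iff)
qed

lemma kkt_eq:
  fixes X :: "real^'p^'n"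
  assumes sol: "is_lasso_sol X y lam b" and nz: "b$k \<noteq> 0"
  shows "b$k * (column k X \<bullet> (y - X *v b)) = real CARD('n) * lam * \<bar>b$k\<bar>"
proof -
  let ?N = "real CARD('n)"
  let ?a = "column k X \<bullet> (y - X *v b)" and ?q = "(norm (column k X))^2"
  have d: "0 < \<bar>b$k\<bar>" using nz by simp
  have A: "0 \<le> 2*(?N*lam - sgn (b$k) * ?a)"
  proof (rule one_sided[OF d, of ?q])
    fix t :: real assume t: "0 < t" "t < \<bar>b$k\<bar>"
    let ?s = "sgn (b$k) * t"
    have E: "\<bar>b$k + ?s\<bar> - \<bar>b$k\<bar> = t" using t nz by (auto simp: sgn_if)
    have S: "?s^2 = t^2" using nz by (simp add: power_mult_distrib sgn_if)
    have "0 \<le> -2*?s*?a + ?s^2*?q + 2*?N*lam*t"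
      using kkt_basic[OF sol, of ?s k] unfolding E .
    hence "0 \<le> -2*?s*?a + t^2*?q + 2*?N*lam*t" unfolding S .
    then show "0 \<le> t * (2*(?N*lam - sgn (b$k) * ?a)) + t^2 * ?q"
      by (simp add: algebra_simps)
  qed auto
  have B: "0 \<le> 2*(sgn (b$k) * ?a - ?N*lam)"
  proof (rule one_sided[OF d, of ?q])
    fix t :: real assume t: "0 < t" "t < \<bar>b$k\<bar>"
    let ?s = "- sgn (b$k) * t"
    have E: "\<bar>b$k + ?s\<bar> - \<bar>b$k\<bar> = -t" using t nz by (auto simp: sgn_if)
    have S: "?s^2 = t^2" using nz by (simp add: power_mult_distrib sgn_if)
    have "0 \<le> -2*?s*?a + ?s^2*?q + 2*?N*lam*(-t)"
      using kkt_basic[OF sol, of ?s k] unfolding E .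
    hence "0 \<le> -2*?s*?a + t^2*?q + 2*?N*lam*(-t)" unfolding S .
    then show "0 \<le> t * (2*(sgn (b$k) * ?a - ?N*lam)) + t^2 * ?q"
      by (simp add: algebra_simps)
  qed auto
  from A B have "sgn (b$k) * ?a = ?N*lam" by (smt (verit))
  moreover have "b$k = \<bar>b$k\<bar> * sgn (b$k)" by (simp add: abs_mult_sgn)
  ultimately show ?thesis by (metis mult.assoc mult.commute)
qed

lemma geo:
  fixes th tm v u y :: "'a::real_inner" and al L :: real
  assumes A: "(v - th) \<bullet> (tm - th) \<le> 0" and B: "u \<bullet> th \<le> 1" and um: "u \<bullet> tm = 1"
    and w: "v - tm = al *\<^sub>R y" and al: "0 \<le> al" and L: "0 \<le> L"
  shows "norm (th - (tm + (1/2) *\<^sub>R (al *\<^sub>R y - (al*L) *\<^sub>R u)))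
          \<le> norm (al *\<^sub>R y - (al*L) *\<^sub>R u) / 2"
proof -
  define d where "d = th - tm"
  define wp where "wp = al *\<^sub>R y - (al*L) *\<^sub>R u"
  have vth: "v - th = al *\<^sub>R y - d" using w unfolding d_def by (simp add: algebra_simps)
  have "tm - th = - d" unfolding d_def by simp
  with A vth have 1: "d \<bullet> d \<le> (al *\<^sub>R y) \<bullet> d" by (simp add: inner_diff_left)
  have ud: "u \<bullet> d \<le> 0" using B um unfolding d_def by (simp add: inner_diff_right)
  have "(al *\<^sub>R y) \<bullet> d = wp \<bullet> d + (al*L) * (u \<bullet> d)"
    unfolding wp_def by (simp add: inner_diff_left algebra_simps)
  also have "\<dots> \<le> wp \<bullet> d" using ud al L by (simp add: mult_nonneg_nonpos)
  finally have 2: "d \<bullet> d \<le> wp \<bullet> d" using 1 by simp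
  have "(norm (d - (1/2) *\<^sub>R wp))^2 = d \<bullet> d - wp \<bullet> d + (norm wp)^2/4"
    unfolding power2_norm_eq_inner
    by (simp add: inner_diff_left inner_diff_right inner_commute algebra_simps)
  also have "\<dots> \<le> (norm wp / 2)^2" using 2 by (simp add: power_divide)
  finally have "norm (d - (1/2) *\<^sub>R wp) \<le> norm wp / 2"
    by (rule power2_le_imp_le) simp
  moreover have "th - (tm + (1/2) *\<^sub>R wp) = d - (1/2) *\<^sub>R wp" unfolding d_def by simp
  ultimately have "norm (th - (tm + (1/2) *\<^sub>R wp)) \<le> norm wp / 2" by metis
  thus ?thesis unfolding wp_def .
qed

lemma norm_col: fixes X :: "real^'p^'n"
  shows "(norm (column k X))^2 = (\<Sum>i\<in>UNIV. (X $ i $ k)\<^sup>2)"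
  unfolding power2_norm_eq_inner by (simp add: inner_vec_def column_def power2_eq_square)

lemma Xb_inner: fixes X :: "real^'p^'n"
  shows "(X *v b) \<bullet> z = (\<Sum>k\<in>UNIV. b$k * (column k X \<bullet> z))"
  unfolding matrix_mult_sum by (simp add: inner_sum_left scalar_mult_eq_scaleR)

theorem theorem2p1:
  fixes y :: "real^'n" and X :: "real^'p^'n" and lam :: real and j kstar :: 'p
  assumes y_centered: "(\<Sum>i\<in>UNIV. y $ i) = 0"
    and X_centered: "\<And>k. (\<Sum>i\<in>UNIV. X $ i $ k) = 0"
    and X_scaled: "\<And>k. (1 / real CARD('n)) * (\<Sum>i\<in>UNIV. (X $ i $ k)\<^sup>2) = 1"
    and kstar_max: "\<And>k. \<bar>column k X \<bullet> y\<bar> \<le> \<bar>column kstar X \<bullet> y\<bar>"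
    and lam_pos: "0 < lam" and lam_le: "lam \<le> lambda_max X y"
    and rule: "\<bar>(lambda_max X y + lam) * (column j X \<bullet> y)
                 - (lambda_max X y - lam) * sgn (column kstar X \<bullet> y) * lambda_max X y
                     * (column j X \<bullet> column kstar X)\<bar>
             < 2 * real CARD('n) * lam * lambda_max X y
               - (lambda_max X y - lam) *
                   sqrt (real CARD('n) * (norm y)\<^sup>2 - (real CARD('n))\<^sup>2 * (lambda_max X y)\<^sup>2)"
    and sol: "is_lasso_sol X y lam b"
  shows "b $ j = 0"
proof -
  define N where "N = real CARD('n)"
  define L where "L = lambda_max X y"
  define r where "r = y - X *v b"
  define xs where "xs = column kstar X"
  define xj where "xj = column j X"
  define s where "s = sgn (xs \<bullet> y)"
  have N0: "0 < N" unfolding N_def by simp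
  have fin: "finite (range (\<lambda>k. \<bar>column k X \<bullet> y / real CARD('n)\<bar>))" by simp
  have Lge: "\<bar>column k X \<bullet> y / N\<bar> \<le> L" for k
    unfolding L_def lambda_max_def N_def by (rule Max_ge[OF fin]) auto
  have "L \<in> range (\<lambda>k. \<bar>column k X \<bullet> y / real CARD('n)\<bar>)"
    unfolding L_def lambda_max_def by (rule Max_in[OF fin]) simp
  then obtain k0 where "L = \<bar>column k0 X \<bullet> y / N\<bar>" unfolding N_def by (elim rangeE)
  hence "L \<le> \<bar>xs \<bullet> y\<bar> / N" using kstar_max[of k0] N0 unfolding xs_def
    by (simp add: divide_right_mono)
  with Lge[of kstar] have L1: "\<bar>xs \<bullet> y\<bar> = N * L" using N0 unfolding xs_def by (simp add: field_simps)
  have lL: "lam \<le> L" using lam_le unfolding L_def .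
  have L0: "0 < L" using lam_pos lL by simp
  have L3: "\<bar>column k X \<bullet> y\<bar> \<le> N * L" for k using Lge[of k] N0 by (simp add: field_simps)
  have ncol: "(norm (column k X))^2 = N" for k
    using X_scaled[of k] N0 unfolding norm_col N_def by (simp add: field_simps)
  have kb: "\<bar>column k X \<bullet> r\<bar> \<le> N * lam" for k
    using kkt_bound[OF sol, of k] lam_pos unfolding r_def N_def by simp
  have ke: "b$k * (column k X \<bullet> r) = N * lam * \<bar>b$k\<bar>" for k
    using kkt_eq[OF sol, of k] unfolding r_def N_def by (cases "b$k = 0") auto
  have s2: "s * s = 1" using L1 N0 L0 unfolding s_def by (auto simp: sgn_if)
  have sy: "s * (xs \<bullet> y) = N * L" using L1 unfolding s_def by (simp add: sgn_if abs_if split: if_splits)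
  define th where "th = (1/(N*lam)) *\<^sub>R r"
  define tm where "tm = (1/(N*L)) *\<^sub>R y"
  define v where "v = (1/(N*lam)) *\<^sub>R y"
  define u where "u = s *\<^sub>R xs"
  define al where "al = 1/(N*lam) - 1/(N*L)"
  define wp where "wp = al *\<^sub>R y - (al*L) *\<^sub>R u"
  define c where "c = tm + (1/2) *\<^sub>R wp"
  have al0: "0 \<le> al" unfolding al_def using N0 lam_pos lL
    by (simp add: frac_le mult_left_mono mult_pos_pos)
  have XbT: "(X *v b) \<bullet> th = (\<Sum>k\<in>UNIV. \<bar>b$k\<bar>)"
  proof -
    have "(X *v b) \<bullet> th = (1/(N*lam)) * ((X *v b) \<bullet> r)" unfolding th_def by simp
    also have "(X *v b) \<bullet> r = (\<Sum>k\<in>UNIV. N*lam*\<bar>b$k\<bar>)" unfolding Xb_inner ke ..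
    also have "\<dots> = N*lam*(\<Sum>k\<in>UNIV. \<bar>b$k\<bar>)" by (simp add: sum_distrib_left)
    finally show ?thesis using N0 lam_pos by simp
  qed
  have XbM: "(X *v b) \<bullet> tm \<le> (\<Sum>k\<in>UNIV. \<bar>b$k\<bar>)"
  proof -
    have "(X *v b) \<bullet> tm = (\<Sum>k\<in>UNIV. b$k * (1/(N*L) * (column k X \<bullet> y)))"
      unfolding Xb_inner tm_def by simp
    also have "\<dots> \<le> (\<Sum>k\<in>UNIV. \<bar>b$k\<bar>)"
  proof (rule sum_mono)
    fix k :: 'p
    have "b$k * (column k X \<bullet> y) \<le> \<bar>b$k\<bar> * \<bar>column k X \<bullet> y\<bar>"
      by (metis abs_ge_self abs_mult)
    also have "\<dots> \<le> \<bar>b$k\<bar> * (N*L)" using L3[of k] by (simp add: mult_left_mono)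
    finally have "b$k * (column k X \<bullet> y) / (N*L) \<le> \<bar>b$k\<bar>" using N0 L0
      by (simp add: divide_le_eq mult.commute)
    thus "b$k * (1/(N*L) * (column k X \<bullet> y)) \<le> \<bar>b$k\<bar>" by simp
  qed
    finally show ?thesis .
  qed
  have vth: "v - th = (1/(N*lam)) *\<^sub>R (X *v b)"
    unfolding v_def th_def r_def by (simp add: algebra_simps)
  have A: "(v - th) \<bullet> (tm - th) \<le> 0"
  proof -
    have "(v - th) \<bullet> (tm - th) = (1/(N*lam)) * ((X *v b) \<bullet> tm - (X *v b) \<bullet> th)"
      unfolding vth by (simp only: inner_scaleR_left inner_diff_right right_diff_distrib)
    also have "\<dots> \<le> 0" using XbT XbM N0 lam_pos
      by (intro mult_nonneg_nonpos) auto
    finally show ?thesis .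
  qed
  have B: "u \<bullet> th \<le> 1"
  proof -
    have "u \<bullet> th = s * (xs \<bullet> r) / (N*lam)" unfolding u_def th_def by simp
    also have "s * (xs \<bullet> r) \<le> N*lam"
    proof -
      have "\<bar>s\<bar> \<le> 1" unfolding s_def by (simp add: sgn_if)
      have "s * (xs \<bullet> r) \<le> \<bar>s\<bar> * \<bar>xs \<bullet> r\<bar>" by (simp only: abs_mult[symmetric] abs_ge_self)
      also have "\<dots> \<le> 1 * \<bar>xs \<bullet> r\<bar>" using \<open>\<bar>s\<bar> \<le> 1\<close> by (intro mult_right_mono) auto
      finally have "s * (xs \<bullet> r) \<le> 1 * \<bar>xs \<bullet> r\<bar>" .
      thus ?thesis using kb[of kstar] unfolding xs_def by simp
    qed
    hence "s * (xs \<bullet> r) / (N*lam) \<le> 1" using N0 lam_pos by (simp add: divide_le_eq)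
    finally show ?thesis .
  qed
  have um: "u \<bullet> tm = 1"
    unfolding u_def tm_def using sy N0 L0 by simp
  have w: "v - tm = al *\<^sub>R y" unfolding v_def tm_def al_def by (simp add: algebra_simps)
  have G: "norm (th - c) \<le> norm wp / 2"
    using geo[OF A B um w al0 less_imp_le[OF L0]] unfolding c_def wp_def .
  define Y where "Y = (norm y)^2 - N*L^2"
  define P where "P = xj \<bullet> y"
  define Q where "Q = xj \<bullet> xs"
  define R where "R = sqrt (N*(norm y)^2 - N^2*L^2)"
  have rule': "\<bar>(L + lam) * P - (L - lam) * s * L * Q\<bar> < 2 * N * lam * L - (L - lam) * R"
    using rule unfolding N_def[symmetric] L_def[symmetric] xj_def[symmetric] xs_def[symmetric]
      s_def[symmetric] P_def[symmetric] Q_def[symmetric] R_def[symmetric] .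
  have nj: "norm xj = sqrt N" using ncol[of j] unfolding xj_def
    by (metis norm_ge_zero real_sqrt_unique)
  have uy: "u \<bullet> y = N*L" unfolding u_def using sy by simp
  have uu: "u \<bullet> u = N" unfolding u_def using ncol[of kstar] s2
    by (simp add: xs_def power2_norm_eq_inner)
  have "(norm wp)^2 = al^2 * Y"
  proof -
    have "(norm wp)^2 = wp \<bullet> wp" by (simp add: power2_norm_eq_inner)
    also have "\<dots> = al^2 * (y \<bullet> y) - 2*al*(al*L)*(u \<bullet> y) + (al*L)^2*(u \<bullet> u)"
      unfolding wp_def by (simp add: inner_diff_left inner_diff_right inner_commute
          algebra_simps power2_eq_square)
    also have "\<dots> = al^2 * Y" unfolding uy uu Y_def power2_norm_eq_inner
      by (simp add: algebra_simps power2_eq_square)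
    finally show ?thesis .
  qed
  hence nwp: "norm wp = al * sqrt Y"
    by (metis al0 norm_ge_zero real_sqrt_abs real_sqrt_mult abs_of_nonneg real_sqrt_unique)
  have "\<bar>xj \<bullet> th\<bar> \<le> \<bar>xj \<bullet> c\<bar> + \<bar>xj \<bullet> (th - c)\<bar>"
    by (simp add: inner_diff_right abs_triangle_ineq4[of "xj \<bullet> th" "xj \<bullet> c", simplified] )
  also have "\<bar>xj \<bullet> (th - c)\<bar> \<le> norm xj * norm (th - c)" by (rule Cauchy_Schwarz_ineq2)
  also have "\<dots> \<le> sqrt N * (al * sqrt Y / 2)" unfolding nj nwp[symmetric]
    using G N0 by (intro mult_left_mono) auto
  finally have T1: "\<bar>xj \<bullet> th\<bar> \<le> \<bar>xj \<bullet> c\<bar> + sqrt N * (al * sqrt Y / 2)" by simp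
  have K: "N*lam*L*al = L - lam" unfolding al_def using N0 lam_pos L0 by (simp add: field_simps)
  have C1: "(2*N*lam*L) * (xj \<bullet> c) = (L + lam) * P - (L - lam) * s * L * Q"
  proof -
    have h: "xj \<bullet> c = P/(N*L) + (al*P - al*L * s * Q)/2"
      unfolding c_def wp_def tm_def u_def P_def Q_def
      by (simp add: inner_add_right inner_diff_right algebra_simps add_divide_distrib diff_divide_distrib)
    have "(2*N*lam*L) * (xj \<bullet> c) = 2*lam*P + (N*lam*L*al)*P - (N*lam*L*al)*L * s * Q"
      unfolding h using N0 L0 by (simp add: field_simps)
    thus ?thesis unfolding K by (simp add: algebra_simps)
  qed
  have C2: "(2*N*lam*L) * (sqrt N * (al * sqrt Y / 2)) = (L - lam) * R"
  proof -
    have "R = sqrt N * sqrt Y" unfolding R_def Y_def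
      by (simp add: real_sqrt_mult[symmetric] algebra_simps power2_eq_square)
    moreover have "(2*N*lam*L) * (sqrt N * (al * sqrt Y / 2)) = (N*lam*L*al) * (sqrt N * sqrt Y)"
      by (simp add: algebra_simps)
    ultimately show ?thesis unfolding K by simp
  qed
  have pos: "0 < 2*N*lam*L" using N0 lam_pos L0 by simp
  have "(2*N*lam*L) * \<bar>xj \<bullet> th\<bar> \<le> (2*N*lam*L) * (\<bar>xj \<bullet> c\<bar> + sqrt N * (al * sqrt Y / 2))"
    using T1 pos by (intro mult_left_mono) auto
  also have "\<dots> = \<bar>(2*N*lam*L) * (xj \<bullet> c)\<bar> + (2*N*lam*L) * (sqrt N * (al * sqrt Y / 2))"
    using pos N0 lam_pos L0 by (simp add: distrib_left abs_mult)
  also have "\<dots> < 2*N*lam*L" unfolding C1 C2 using rule' by simp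
  finally have "(2*N*lam*L) * \<bar>xj \<bullet> th\<bar> < (2*N*lam*L) * 1" by simp
  hence "\<bar>xj \<bullet> th\<bar> < 1" using pos by (metis mult_less_cancel_left_pos)
  moreover have "xj \<bullet> th = (xj \<bullet> r) / (N*lam)" unfolding th_def by simp
  ultimately have lt: "\<bar>xj \<bullet> r\<bar> < N*lam" using N0 lam_pos by (simp add: abs_div divide_less_eq)
  show ?thesis
  proof (rule ccontr)
    assume nz: "b$j \<noteq> 0"
    have "\<bar>b$j\<bar> * \<bar>xj \<bullet> r\<bar> = \<bar>b$j\<bar> * (N*lam)"
      using arg_cong[OF ke[of j], of abs] N0 lam_pos unfolding xj_def by (simp add: abs_mult)
    hence "\<bar>xj \<bullet> r\<bar> = N*lam" using nz by simp
    with lt show False by simp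
  qed
qed

end
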